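(* If $(M,(I,O))$ is a left-connected oriented map with root $r$, then every vertex of $M$ not containing $r$ is incident to a half-edge in $I$, and every face of $M$ not containing $r$ is incident to a half-edge in $O$.
   Context: A map is $M=(H,\sigma,\alpha)$ with $H$ finite, $\alpha$ a fixed-point-free involution, $\sigma$ a permutation, $\langle\sigma,\alpha\rangle$ transitive, with root $r\in H$. Vertices are cycles of $\sigma$, faces are cycles of $\phi=\sigma\alpha$ ($\phi(h)=\sigma(\alpha(h))$); a half-edge is incident to a vertex/face if it belongs to the cycle. An orientation is a partition $H=I\uplus O$ with $\alpha(I)=O$. A left-path is a sequence $h_1,\dots,h_k$ of half-edges in $I$ such that, with $h_0=r$, for each $j$ there is $q_j>0$ with $h_{j-1}=\sigma^{q_j}(\alpha(h_j))$ and $\sigma^p(\alpha(h_j))\in O$ for $p=0,\dots,q_j-1$. The oriented map is left-connected if every half-edge of $I$ is the last element of a left-path. *)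

theory Defs
  imports Main
begin

text \<open>A rooted map (H, sigma, alpha) with root r. Functions are only relevant on H.\<close>
definition is_rooted_map :: "'a set \<Rightarrow> ('a \<Rightarrow> 'a) \<Rightarrow> ('a \<Rightarrow> 'a) \<Rightarrow> 'a \<Rightarrow> bool" where
  "is_rooted_map H \<sigma> \<alpha> r \<longleftrightarrow>
     finite H \<and> bij_betw \<sigma> H H \<and> bij_betw \<alpha> H H \<and>
     (\<forall>h\<in>H. \<alpha> h \<noteq> h \<and> \<alpha> (\<alpha> h) = h) \<and>
     (\<forall>x\<in>H. \<forall>y\<in>H. (x, y) \<in> ({(z, \<sigma> z) | z. z \<in> H} \<union> {(z, \<alpha> z) | z. z \<in> H})\<^sup>*) \<and>
     r \<in> H"

text \<open>The cycle of a permutation f containing h (vertices: f = sigma; faces: f = phi).\<close>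
definition cycle_of :: "('a \<Rightarrow> 'a) \<Rightarrow> 'a \<Rightarrow> 'a set" where
  "cycle_of f h = {(f ^^ n) h | n. True}"

definition face_perm :: "('a \<Rightarrow> 'a) \<Rightarrow> ('a \<Rightarrow> 'a) \<Rightarrow> 'a \<Rightarrow> 'a" where
  "face_perm \<sigma> \<alpha> h = \<sigma> (\<alpha> h)"

definition orientation :: "'a set \<Rightarrow> ('a \<Rightarrow> 'a) \<Rightarrow> 'a set \<Rightarrow> 'a set \<Rightarrow> bool" where
  "orientation H \<alpha> Inn Out \<longleftrightarrow> Inn \<union> Out = H \<and> Inn \<inter> Out = {} \<and> \<alpha> ` Inn = Out"

text \<open>Left-path h_1..h_k (list hs, hs!j = h_(j+1)), with h_0 = r.\<close>
definition left_path :: "('a \<Rightarrow> 'a) \<Rightarrow> ('a \<Rightarrow> 'a) \<Rightarrow> 'a \<Rightarrow> 'a set \<Rightarrow> 'a set \<Rightarrow> 'a list \<Rightarrow> bool" where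
  "left_path \<sigma> \<alpha> r Inn Out hs \<longleftrightarrow>
     set hs \<subseteq> Inn \<and>
     (\<forall>j < length hs. \<exists>q > 0. (r # hs) ! j = (\<sigma> ^^ q) (\<alpha> (hs ! j)) \<and>
                               (\<forall>p < q. (\<sigma> ^^ p) (\<alpha> (hs ! j)) \<in> Out))"

definition left_connected :: "('a \<Rightarrow> 'a) \<Rightarrow> ('a \<Rightarrow> 'a) \<Rightarrow> 'a \<Rightarrow> 'a set \<Rightarrow> 'a set \<Rightarrow> bool" where
  "left_connected \<sigma> \<alpha> r Inn Out \<longleftrightarrow>
     (\<forall>h\<in>Inn. \<exists>hs. hs \<noteq> [] \<and> left_path \<sigma> \<alpha> r Inn Out hs \<and> last hs = h)"

end

theory Submission
  imports Defs
begin

lemma cyc_step: "x \<in> cycle_of f h \<Longrightarrow> f x \<in> cycle_of f h"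
proof -
  assume "x \<in> cycle_of f h"
  then obtain n where "x = (f ^^ n) h" unfolding cycle_of_def by blast
  hence "f x = (f ^^ Suc n) h" by simp
  thus ?thesis unfolding cycle_of_def by blast
qed

lemma cyc_pow: "(f ^^ n) (x::'a) \<in> cycle_of f x" for f :: "'a \<Rightarrow> 'a"
  unfolding cycle_of_def by auto

theorem mainTheorem10:
  assumes "is_rooted_map H \<sigma> \<alpha> r"
    and "orientation H \<alpha> Inn Out"
    and "left_connected \<sigma> \<alpha> r Inn Out"
  shows "(\<forall>h\<in>H. r \<notin> cycle_of \<sigma> h \<longrightarrow> (\<exists>h'\<in>cycle_of \<sigma> h. h' \<in> Inn)) \<and>
         (\<forall>h\<in>H. r \<notin> cycle_of (face_perm \<sigma> \<alpha>) h \<longrightarrow> (\<exists>h'\<in>cycle_of (face_perm \<sigma> \<alpha>) h. h' \<in> Out))"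
proof (intro conjI ballI impI)
  have inv: "\<And>x. x \<in> H \<Longrightarrow> \<alpha> (\<alpha> x) = x" using assms(1) unfolding is_rooted_map_def by blast
  have or: "Inn \<union> Out = H" "Inn \<inter> Out = {}" "\<alpha> ` Inn = Out" using assms(2) unfolding orientation_def by auto
  have lc: "\<And>x. x \<in> Inn \<Longrightarrow> \<exists>hs. hs \<noteq> [] \<and> left_path \<sigma> \<alpha> r Inn Out hs \<and> last hs = x"
    using assms(3) unfolding left_connected_def by blast
  {
    fix h assume hH: "h \<in> H" and nr: "r \<notin> cycle_of \<sigma> h"
    show "\<exists>h'\<in>cycle_of \<sigma> h. h' \<in> Inn"
    proof (rule ccontr)
      assume na: "\<not> ?thesis"
      have "h \<in> cycle_of \<sigma> h" using cyc_pow[where f=\<sigma> and n=0 and x=h] by simp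
      with na have "h \<notin> Inn" by blast
      with hH or obtain x where x: "x \<in> Inn" "h = \<alpha> x" by blast
      have ah: "\<alpha> h = x" using x or inv by blast
      obtain hs where hs: "hs \<noteq> []" "left_path \<sigma> \<alpha> r Inn Out hs" "last hs = x" using lc x(1) by blast
      define j where "j = length hs - 1"
      have j: "j < length hs" "hs ! j = x" using hs by (auto simp: j_def last_conv_nth)
      then obtain q where "(r # hs) ! j = (\<sigma> ^^ q) (\<alpha> (hs ! j))"
        using hs(2) unfolding left_path_def by blast
      hence e: "(r # hs) ! j = (\<sigma> ^^ q) h" using j x(2) by simp
      show False
      proof (cases j)
        case 0 then show ?thesis using e nr cyc_pow[where f=\<sigma> and n=q and x=h] by simp
      next
        case (Suc i)
        then have "(r#hs)!j = hs ! i" "i < length hs" using j by auto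
        then have "(r#hs)!j \<in> Inn" using hs(2) unfolding left_path_def by auto
        then show ?thesis using e na cyc_pow[where f=\<sigma> and n=q and x=h] by auto
      qed
    qed
  }
  {
    fix h assume hH: "h \<in> H" and nr: "r \<notin> cycle_of (face_perm \<sigma> \<alpha>) h"
    let ?C = "cycle_of (face_perm \<sigma> \<alpha>) h"
    show "\<exists>h'\<in>?C. h' \<in> Out"
    proof (rule ccontr)
      assume na: "\<not> ?thesis"
      have "h \<in> ?C" using cyc_pow[where f="face_perm \<sigma> \<alpha>" and n=0 and x=h] by simp
      with na hH or have hI: "h \<in> Inn" by blast
      obtain hs where hs: "hs \<noteq> []" "left_path \<sigma> \<alpha> r Inn Out hs" "last hs = h" using lc hI by blast
      have key: "\<forall>j. j < length hs \<longrightarrow> hs ! j \<notin> ?C" if "k = k" for k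
      proof (intro allI)
        fix j show "j < length hs \<longrightarrow> hs ! j \<notin> ?C"
        proof (induction j)
          case 0
          show ?case
          proof
            assume l: "0 < length hs"
            show "hs ! 0 \<notin> ?C"
            proof
              assume c: "hs ! 0 \<in> ?C"
              obtain q where q: "q > 0" "(r # hs) ! 0 = (\<sigma> ^^ q) (\<alpha> (hs ! 0))"
                "\<forall>p<q. (\<sigma> ^^ p) (\<alpha> (hs ! 0)) \<in> Out"
                using hs(2) l unfolding left_path_def by blast
              have fc: "\<sigma> (\<alpha> (hs!0)) \<in> ?C" using cyc_step[OF c] by (simp add: face_perm_def)
              show False
              proof (cases "q = 1")
                case True then show ?thesis using q fc nr by simp
              next
                case False then have "1 < q" using q(1) by simp
                  then have "\<sigma> (\<alpha> (hs!0)) \<in> Out" using q(3) by (metis funpow_0 funpow.simps(2) o_apply One_nat_def)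
                then show ?thesis using fc na by blast
              qed
            qed
          qed
        next
          case (Suc i)
          show ?case
          proof
            assume l: "Suc i < length hs"
            show "hs ! Suc i \<notin> ?C"
            proof
              assume c: "hs ! Suc i \<in> ?C"
              obtain q where q: "q > 0" "(r # hs) ! Suc i = (\<sigma> ^^ q) (\<alpha> (hs ! Suc i))"
                "\<forall>p<q. (\<sigma> ^^ p) (\<alpha> (hs ! Suc i)) \<in> Out"
                using hs(2) l unfolding left_path_def by blast
              have fc: "\<sigma> (\<alpha> (hs!Suc i)) \<in> ?C" using cyc_step[OF c] by (simp add: face_perm_def)
              show False
              proof (cases "q = 1")
                case True then show ?thesis using q fc Suc l by simp
              next
                case False then have "1 < q" using q(1) by simp
                  then have "\<sigma> (\<alpha> (hs!Suc i)) \<in> Out" using q(3) by (metis funpow_0 funpow.simps(2) o_apply One_nat_def)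
                then show ?thesis using fc na by blast
              qed
            qed
          qed
        qed
      qed
      have "hs ! (length hs - 1) = h" using hs by (simp add: last_conv_nth)
      moreover have "length hs - 1 < length hs" using hs by simp
      ultimately show False using key[of 0] \<open>h \<in> ?C\<close> by auto
    qed
  }
qed

end
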